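(* For all positive integers $n$ and $j$, $L_n(j)=A_n\big(10+6(j-1)\big)$.
   Context: The continued fraction $[a_1;a_2:\dots:a_k]$ means $a_1+1/(a_2+1/(\cdots+1/a_k))$. For a sequence $(a_1,\dots,a_k)$ of positive integers with $k\ge2$, $\breve K(a_1,\dots,a_k)$ is the integer $c$ where $[a_1;a_2:\dots:a_{k-1}]=c/d$ with $\gcd(c,d)=1$, $c,d>0$ (the last entry $a_k$ is omitted). For a positive integer $n$ let $a_n=n^2+3$, $b_n=n^4+5n^2+5$, $l_n=(na_n)^2+2$. Define $L_n(1)=\breve K(na_n,na_n,nb_n,nb_n)$, $L_n(2)=\breve K(na_n,na_n,na_n,na_n,nb_n,nb_n)$, and $L_n(j)=l_nL_n(j-1)-L_n(j-2)$ for $j>2$. Define $A_n(1)=1$, $A_n(2)=n(n^2+4)$, and $A_n(j)=nA_n(j-1)+A_n(j-2)$ for $j>2$. *)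

theory Defs
  imports Complex_Main
begin

fun cfrac :: "nat list \<Rightarrow> rat" where
  "cfrac [] = 0"
| "cfrac [a] = of_nat a"
| "cfrac (a # b # rest) = of_nat a + 1 / cfrac (b # rest)"

definition Kbreve :: "nat list \<Rightarrow> int" where
  "Kbreve xs = fst (quotient_of (cfrac (butlast xs)))"

definition aa :: "nat \<Rightarrow> nat" where "aa n = n^2 + 3"
definition bb :: "nat \<Rightarrow> nat" where "bb n = n^4 + 5*n^2 + 5"
definition ll :: "nat \<Rightarrow> int" where "ll n = int ((n * aa n)^2 + 2)"

fun Lseq :: "nat \<Rightarrow> nat \<Rightarrow> int" where
  "Lseq n 0 = 0"
| "Lseq n (Suc 0) = Kbreve [n * aa n, n * aa n, n * bb n, n * bb n]"
| "Lseq n (Suc (Suc 0)) =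
     Kbreve [n * aa n, n * aa n, n * aa n, n * aa n, n * bb n, n * bb n]"
| "Lseq n (Suc (Suc (Suc j))) = ll n * Lseq n (Suc (Suc j)) - Lseq n (Suc j)"

fun Aseq :: "nat \<Rightarrow> nat \<Rightarrow> int" where
  "Aseq n 0 = 0"
| "Aseq n (Suc 0) = 1"
| "Aseq n (Suc (Suc 0)) = int (n * (n^2 + 4))"
| "Aseq n (Suc (Suc (Suc j))) = int n * Aseq n (Suc (Suc j)) + Aseq n (Suc j)"

end

theory Submission
  imports Defs
begin


lemma qo: "q > 0 \<Longrightarrow> coprime p q \<Longrightarrow> r = of_int p / of_int q \<Longrightarrow> quotient_of r = (p, q)"
  by (simp add: Fract_of_int_quotient[symmetric] quotient_of_Fract)

lemma cstep: "(x::rat) > 0 \<Longrightarrow> y > 0 \<Longrightarrow> a + 1 / (x / y) = (a * x + y) / x"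
  by (simp add: field_simps)

lemma bez: assumes h: "u * p + v * q = (1::int)" shows "coprime p q"
proof (rule coprimeI)
  fix c assume "c dvd p" "c dvd q"
  then have "c dvd u * p + v * q" by simp
  then show "is_unit c" using h by simp
qed

lemma K3: fixes a b :: nat assumes "a > 0" "b > 0"
  shows "Kbreve [a, a, b, b] = int a ^ 2 * int b + int a + int b"
proof -
  have c: "cfrac [a, a, b] = of_int (int a ^ 2 * int b + int a + int b) / of_int (int a * int b + 1)"
  proof -
    have nz: "(1::rat) + of_nat a * of_nat b \<noteq> 0" "(of_nat b::rat) \<noteq> 0"
    proof -
      have "(0::rat) \<le> of_nat a * of_nat b" by simp
      then show "(1::rat) + of_nat a * of_nat b \<noteq> 0" by linarith
      show "(of_nat b::rat) \<noteq> 0" using assms by simp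
    qed
    show ?thesis using nz by (simp add: field_simps power2_eq_square)
  qed
  have "quotient_of (cfrac [a, a, b]) = (int a ^ 2 * int b + int a + int b, int a * int b + 1)"
    apply (rule qo[OF _ _ c])
     apply (simp add: add_pos_nonneg)
    apply (rule bez[where u = "- int a" and v = "1 + int a ^ 2"])
    by (simp add: algebra_simps power2_eq_square)
  then show ?thesis by (simp add: Kbreve_def)
qed


lemma K5: fixes a b :: nat assumes "a > 0" "b > 0"
  shows "Kbreve [a, a, a, a, b, b] =
    int a * (int a * (int a * (int a * int b + 1) + int b) + (int a * int b + 1))
      + (int a * (int a * int b + 1) + int b)"
proof -
  define ai where "ai = int a"
  define bi where "bi = int b"
  define q2 where "q2 = ai * bi + 1"
  define p3 where "p3 = ai * q2 + bi"
  define p4 where "p4 = ai * p3 + q2"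
  define p5 where "p5 = ai * p4 + p3"
  have pa: "ai > 0" "bi > 0" using assms by (simp_all add: ai_def bi_def)
  have pq2: "q2 > 0" using pa by (simp add: q2_def add_pos_nonneg)
  have pp3: "p3 > 0" using pa pq2 by (simp add: p3_def add_pos_nonneg)
  have pp4: "p4 > 0" using pa pq2 pp3 by (simp add: p4_def add_pos_nonneg)
  have pp5: "p5 > 0" using pa pq2 pp3 pp4 by (simp add: p5_def add_pos_nonneg)
  have c2: "cfrac [a, b] = of_int q2 / of_int bi"
    using pa by (simp add: q2_def ai_def bi_def field_simps)
  have c3: "cfrac [a, a, b] = of_int p3 / of_int q2"
    using c2 cstep[of "of_int q2" "of_int bi" "of_nat a"] pa pq2
    by (simp add: p3_def ai_def)
  have c4: "cfrac [a, a, a, b] = of_int p4 / of_int p3"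
    using c3 cstep[of "of_int p3" "of_int q2" "of_nat a"] pq2 pp3
    by (simp add: p4_def ai_def)
  have c5: "cfrac [a, a, a, a, b] = of_int p5 / of_int p4"
    using c4 cstep[of "of_int p4" "of_int p3" "of_nat a"] pp3 pp4
    by (simp add: p5_def ai_def)
  have "quotient_of (cfrac [a, a, a, a, b]) = (p5, p4)"
    apply (rule qo[OF pp4 _ c5])
    apply (rule bez[where u = "- (ai^3 + 2*ai)" and v = "ai^4 + 3*ai^2 + 1"])
    by (simp add: p5_def p4_def p3_def q2_def algebra_simps power2_eq_square power3_eq_cube power4_eq_xxxx)
  then show ?thesis by (simp add: Kbreve_def p5_def p4_def p3_def q2_def ai_def bi_def)
qed

lemma Astep: "Aseq n (k + 3) = int n * Aseq n (k + 2) + Aseq n (k + 1)"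
  by (simp add: numeral_3_eq_3)

lemma Arec: "Aseq n (k + 13) = ll n * Aseq n (k + 7) - Aseq n (k + 1)"
proof -
  have e3: "Aseq n (k + 3) = int n * Aseq n (k + 2) + Aseq n (k + 1)"
    using Astep[of n "k+0"] by (simp only: add.assoc numeral_plus_numeral numeral_plus_one one_plus_numeral semiring_norm add_0_right)
  have e4: "Aseq n (k + 4) = int n * Aseq n (k + 3) + Aseq n (k + 2)"
    using Astep[of n "k+1"] by (simp only: add.assoc numeral_plus_numeral numeral_plus_one one_plus_numeral semiring_norm add_0_right)
  have e5: "Aseq n (k + 5) = int n * Aseq n (k + 4) + Aseq n (k + 3)"
    using Astep[of n "k+2"] by (simp only: add.assoc numeral_plus_numeral numeral_plus_one one_plus_numeral semiring_norm add_0_right)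
  have e6: "Aseq n (k + 6) = int n * Aseq n (k + 5) + Aseq n (k + 4)"
    using Astep[of n "k+3"] by (simp only: add.assoc numeral_plus_numeral numeral_plus_one one_plus_numeral semiring_norm add_0_right)
  have e7: "Aseq n (k + 7) = int n * Aseq n (k + 6) + Aseq n (k + 5)"
    using Astep[of n "k+4"] by (simp only: add.assoc numeral_plus_numeral numeral_plus_one one_plus_numeral semiring_norm add_0_right)
  have e8: "Aseq n (k + 8) = int n * Aseq n (k + 7) + Aseq n (k + 6)"
    using Astep[of n "k+5"] by (simp only: add.assoc numeral_plus_numeral numeral_plus_one one_plus_numeral semiring_norm add_0_right)
  have e9: "Aseq n (k + 9) = int n * Aseq n (k + 8) + Aseq n (k + 7)"
    using Astep[of n "k+6"] by (simp only: add.assoc numeral_plus_numeral numeral_plus_one one_plus_numeral semiring_norm add_0_right)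
  have e10: "Aseq n (k + 10) = int n * Aseq n (k + 9) + Aseq n (k + 8)"
    using Astep[of n "k+7"] by (simp only: add.assoc numeral_plus_numeral numeral_plus_one one_plus_numeral semiring_norm add_0_right)
  have e11: "Aseq n (k + 11) = int n * Aseq n (k + 10) + Aseq n (k + 9)"
    using Astep[of n "k+8"] by (simp only: add.assoc numeral_plus_numeral numeral_plus_one one_plus_numeral semiring_norm add_0_right)
  have e12: "Aseq n (k + 12) = int n * Aseq n (k + 11) + Aseq n (k + 10)"
    using Astep[of n "k+9"] by (simp only: add.assoc numeral_plus_numeral numeral_plus_one one_plus_numeral semiring_norm add_0_right)
  have e13: "Aseq n (k + 13) = int n * Aseq n (k + 12) + Aseq n (k + 11)"
    using Astep[of n "k+10"] by (simp only: add.assoc numeral_plus_numeral numeral_plus_one one_plus_numeral semiring_norm add_0_right)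
  show ?thesis
    unfolding e13 e12 e11 e10 e9 e8 e7 e6 e5 e4 e3
    by (simp add: ll_def aa_def algebra_simps power2_eq_square)
qed


lemma L1: assumes "n \<ge> 1" shows "Lseq n 1 = Aseq n 10"
proof -
  have "Lseq n 1 = Kbreve [n * aa n, n * aa n, n * bb n, n * bb n]" by simp
  also have "\<dots> = int (n * aa n) ^ 2 * int (n * bb n) + int (n * aa n) + int (n * bb n)"
    using assms by (intro K3) (auto simp: aa_def bb_def)
  also have "\<dots> = Aseq n 10"
    by (simp add: eval_nat_numeral aa_def bb_def algebra_simps)
  finally show ?thesis .
qed

lemma L2: assumes "n \<ge> 1" shows "Lseq n 2 = Aseq n 16"
proof -
  have "Lseq n 2 = Kbreve [n * aa n, n * aa n, n * aa n, n * aa n, n * bb n, n * bb n]"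
    by (simp add: numeral_2_eq_2)
  also have "\<dots> = (let a = int (n * aa n); b = int (n * bb n) in
      a * (a * (a * (a * b + 1) + b) + (a * b + 1)) + (a * (a * b + 1) + b))"
    unfolding Let_def using assms by (intro K5) (auto simp: aa_def bb_def)
  also have "\<dots> = Aseq n 16"
    by (simp add: Let_def eval_nat_numeral aa_def bb_def algebra_simps)
  finally show ?thesis .
qed

theorem lemma5:
  fixes n j :: nat
  assumes "n \<ge> 1" and "j \<ge> 1"
  shows "Lseq n j = Aseq n (10 + 6 * (j - 1))"
proof -
  have "Lseq n (Suc i) = Aseq n (10 + 6 * i) \<and> Lseq n (Suc (Suc i)) = Aseq n (16 + 6 * i)" for i
  proof (induction i)
    case 0
    then show ?case using L1[OF assms(1)] L2[OF assms(1)] by (simp add: numeral_2_eq_2)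
  next
    case (Suc i)
    have "Lseq n (Suc (Suc (Suc i))) = ll n * Lseq n (Suc (Suc i)) - Lseq n (Suc i)" by simp
    also have "\<dots> = ll n * Aseq n ((9 + 6 * i) + 7) - Aseq n ((9 + 6 * i) + 1)"
      using Suc.IH by simp
    also have "\<dots> = Aseq n ((9 + 6 * i) + 13)" by (rule Arec[symmetric])
    finally show ?case using Suc.IH by simp
  qed
  moreover obtain i where "j = Suc i" using assms(2) by (cases j) auto
  ultimately show ?thesis by simp
qed

end
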